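(* If $\deg(e)\ge 3$ (where $e$ is the base of the natural logarithm, and $\deg(e)=\infty$ is allowed), then $e+\pi$ is a transcendental number.
   Context: Let $\overline{\mathbb{Q}}$ denote the field of algebraic numbers. For $n\ge 1$, an admissible domain in $\mathbb{R}^n$ is a subset of $\mathbb{R}^n$ which is a finite union of sets of the form $\{x\in\mathbb{R}^n : P_1(x)\,\square_1\, 0,\dots,P_r(x)\,\square_r\, 0\}$, where each $P_i$ is a polynomial with real algebraic coefficients and each $\square_i\in\{\ge,>\}$, and which has finite Lebesgue measure $\mathrm{vol}_n$. A real number $p$ is a real period if $p=\mathrm{vol}_n(\Sigma_1)-\mathrm{vol}_n(\Sigma_2)$ for some $n\ge1$ and admissible domains $\Sigma_1,\Sigma_2\subseteq\mathbb{R}^n$. The degree is defined as follows: $\deg(0)=0$; for a nonzero real period $p$, $\deg(p)$ is the least $n\ge 1$ such that $p=\mathrm{vol}_n(\Sigma_1)-\mathrm{vol}_n(\Sigma_2)$ with $\Sigma_1,\Sigma_2$ admissible domains in $\mathbb{R}^n$; for a real number that is not a period, $\deg(p)=\infty$, with $\infty$ larger than every integer. *)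

theory Defs
  imports "HOL-Analysis.Analysis" "HOL-Computational_Algebra.Polynomial"
begin

text \<open>Points of R^n are represented as extensional functions nat => real on {..<n};
  Lebesgue measure on R^n is the n-fold product of lborel.\<close>

definition Rn_measure :: "nat \<Rightarrow> (nat \<Rightarrow> real) measure" where
  "Rn_measure n = PiM {..<n} (\<lambda>_. lborel)"

definition alg_poly_fun :: "nat \<Rightarrow> ((nat \<Rightarrow> real) \<Rightarrow> real) \<Rightarrow> bool" where
  "alg_poly_fun n P \<longleftrightarrow>
     (\<exists>c :: (nat \<Rightarrow> nat) \<Rightarrow> real.
        finite {\<alpha>. c \<alpha> \<noteq> 0} \<and> (\<forall>\<alpha>. algebraic (c \<alpha>)) \<and>
        (\<forall>x. P x = (\<Sum>\<alpha>\<in>{\<alpha>. c \<alpha> \<noteq> 0}. c \<alpha> * (\<Prod>i<n. x i ^ \<alpha> i))))"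

definition basic_set :: "nat \<Rightarrow> (((nat \<Rightarrow> real) \<Rightarrow> real) \<times> bool) list \<Rightarrow> (nat \<Rightarrow> real) set" where
  "basic_set n L = {x \<in> space (Rn_measure n).
      \<forall>(P, strict) \<in> set L. (if strict then P x > 0 else P x \<ge> 0)}"

definition admissible_domain :: "nat \<Rightarrow> (nat \<Rightarrow> real) set \<Rightarrow> bool" where
  "admissible_domain n \<Sigma> \<longleftrightarrow>
     (\<exists>Ls :: (((nat \<Rightarrow> real) \<Rightarrow> real) \<times> bool) list set.
        finite Ls \<and> (\<forall>L\<in>Ls. \<forall>(P, _) \<in> set L. alg_poly_fun n P) \<and>
        \<Sigma> = (\<Union>L\<in>Ls. basic_set n L)) \<and>
     \<Sigma> \<in> sets (Rn_measure n) \<and> emeasure (Rn_measure n) \<Sigma> < \<infinity>"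

definition period_in_dim :: "nat \<Rightarrow> real \<Rightarrow> bool" where
  "period_in_dim n p \<longleftrightarrow> (\<exists>\<Sigma>1 \<Sigma>2. admissible_domain n \<Sigma>1 \<and> admissible_domain n \<Sigma>2 \<and>
      p = measure (Rn_measure n) \<Sigma>1 - measure (Rn_measure n) \<Sigma>2)"

definition real_period :: "real \<Rightarrow> bool" where
  "real_period p \<longleftrightarrow> (\<exists>n\<ge>1. period_in_dim n p)"

definition period_degree :: "real \<Rightarrow> enat" where
  "period_degree p =
     (if p = 0 then 0
      else if real_period p then enat (LEAST n. n \<ge> 1 \<and> period_in_dim n p)
      else \<infinity>)"

end

theory Submission
  imports Defs
begin

lemma alg_poly_funI:
  assumes "finite T" "\<And>\<alpha>. \<alpha> \<in> T \<Longrightarrow> algebraic (c \<alpha>)"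
    "\<And>x. P x = (\<Sum>\<alpha>\<in>T. c \<alpha> * (\<Prod>i<n. x i ^ \<alpha> i))"
  shows "alg_poly_fun n P"
proof -
  define c' where "c' \<alpha> = (if \<alpha> \<in> T then c \<alpha> else 0)" for \<alpha>
  have S: "{\<alpha>. c' \<alpha> \<noteq> 0} \<subseteq> T" by (auto simp: c'_def split: if_splits)
  have fin: "finite {\<alpha>. c' \<alpha> \<noteq> 0}" using S assms(1) finite_subset by blast
  have alg: "\<forall>\<alpha>. algebraic (c' \<alpha>)" using assms(2) by (auto simp: c'_def)
  have "\<forall>x. P x = (\<Sum>\<alpha>\<in>{\<alpha>. c' \<alpha> \<noteq> 0}. c' \<alpha> * (\<Prod>i<n. x i ^ \<alpha> i))"
  proof
    fix x
    have "(\<Sum>\<alpha>\<in>{\<alpha>. c' \<alpha> \<noteq> 0}. c' \<alpha> * (\<Prod>i<n. x i ^ \<alpha> i))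
        = (\<Sum>\<alpha>\<in>T. c' \<alpha> * (\<Prod>i<n. x i ^ \<alpha> i))"
      by (rule sum.mono_neutral_left[OF assms(1) S]) auto
    also have "\<dots> = (\<Sum>\<alpha>\<in>T. c \<alpha> * (\<Prod>i<n. x i ^ \<alpha> i))"
      by (rule sum.cong) (auto simp: c'_def)
    finally show "P x = (\<Sum>\<alpha>\<in>{\<alpha>. c' \<alpha> \<noteq> 0}. c' \<alpha> * (\<Prod>i<n. x i ^ \<alpha> i))"
      using assms(3) by simp
  qed
  then show ?thesis unfolding alg_poly_fun_def using fin alg by blast
qed

definition mono2 :: "nat \<Rightarrow> nat \<Rightarrow> nat \<Rightarrow> nat" where
  "mono2 a b = (\<lambda>i. if i = 0 then a else if i = 1 then b else 0)"

lemma mono2_eq: "mono2 a b = mono2 a' b' \<longleftrightarrow> a = a' \<and> b = b'"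
proof
  assume h: "mono2 a b = mono2 a' b'"
  have "mono2 a b 0 = mono2 a' b' 0" "mono2 a b 1 = mono2 a' b' 1" using h by simp_all
  thus "a = a' \<and> b = b'" by (simp add: mono2_def)
qed simp

lemma mono2_prod: "(\<Prod>i<2. x i ^ mono2 a b i) = x 0 ^ a * (x 1 :: real) ^ b"
  by (simp add: mono2_def numeral_2_eq_2)

lemma alg1: "algebraic (1::real)" by (rule rat_imp_algebraic) simp
lemma algm1: "algebraic (-1::real)" by (rule rat_imp_algebraic) simp

lemma poly_x0: "alg_poly_fun 2 (\<lambda>x. x 0)"
  by (rule alg_poly_funI[where T="{mono2 1 0}" and c="\<lambda>_. 1"]) (auto simp: mono2_prod alg1)

lemma poly_x1: "alg_poly_fun 2 (\<lambda>x. x 1)"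
  by (rule alg_poly_funI[where T="{mono2 0 1}" and c="\<lambda>_. 1"]) (auto simp: mono2_prod alg1)

lemma poly_a_x0: "algebraic a \<Longrightarrow> alg_poly_fun 2 (\<lambda>x. a - x 0)"
  by (rule alg_poly_funI[where T="{mono2 0 0, mono2 1 0}" and c="\<lambda>m. if m = mono2 0 0 then a else -1"])
     (auto simp: mono2_prod alg1 algm1 mono2_eq)

lemma poly_1_x1: "alg_poly_fun 2 (\<lambda>x. 1 - x 1)"
  by (rule alg_poly_funI[where T="{mono2 0 0, mono2 0 1}" and c="\<lambda>m. if m = mono2 0 0 then 1 else -1"])
     (auto simp: mono2_prod alg1 algm1 mono2_eq)

lemma poly_disk: "alg_poly_fun 2 (\<lambda>x. 1 - x 0 ^ 2 - x 1 ^ 2)"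
  by (rule alg_poly_funI[where T="{mono2 0 0, mono2 2 0, mono2 0 2}" and c="\<lambda>m. if m = mono2 0 0 then 1 else -1"])
     (auto simp: mono2_prod alg1 algm1 mono2_eq)

lemma space_Rn2: "space (Rn_measure 2) = PiE {..<2} (\<lambda>_. UNIV)"
  by (simp add: Rn_measure_def space_PiM)

lemma sum2: "(\<Sum>i<2::nat. (f i :: real)\<^sup>2) = f 0 ^ 2 + f 1 ^ 2"
  by (simp add: numeral_2_eq_2)
lemma disk_eq:
  "basic_set 2 [(\<lambda>x. 1 - x 0 ^ 2 - x 1 ^ 2, False)] =
   {f. sqrt (\<Sum>i\<in>{..<2::nat}. (f i)\<^sup>2) \<le> 1} \<inter> space (Pi\<^sub>M {..<2::nat} (\<lambda>_. lborel))"
  unfolding basic_set_def Rn_measure_def sum2 real_sqrt_le_1_iff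
  by (rule set_eqI) (simp only: mem_Collect_eq Int_iff list.set empty_iff insert_iff, auto)

lemma disk_emeasure:
  "emeasure (Rn_measure 2) (basic_set 2 [(\<lambda>x. 1 - x 0 ^ 2 - x 1 ^ 2, False)]) = ennreal pi"
proof -
  have "unit_ball_vol (real 2) = pi"
    using unit_ball_vol_even[of 1] by simp
  then show ?thesis
    unfolding disk_eq Rn_measure_def
    using emeasure_cball_aux[of "{..<2::nat}" 1] by simp
qed

lemma disk_sets:
  "basic_set 2 [(\<lambda>x. 1 - x 0 ^ 2 - x 1 ^ 2, False)] \<in> sets (Rn_measure 2)"
  unfolding basic_set_def Rn_measure_def by simp measurable

definition box2 :: "real \<Rightarrow> nat \<Rightarrow> real set" where
  "box2 a i = (if i = 0 then {0..a} else {0..1})"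

lemma ball2: "(\<forall>i\<in>{..<2::nat}. P i) \<longleftrightarrow> P 0 \<and> P 1"
  by (simp add: numeral_2_eq_2 lessThan_Suc conj_commute)

lemma rect_eq:
  "basic_set 2 [(\<lambda>x. x 0, False), (\<lambda>x. a - x 0, False), (\<lambda>x. x 1, False), (\<lambda>x. 1 - x 1, False)]
   = PiE {..<2} (box2 a)"
  by (rule set_eqI) (simp add: basic_set_def space_Rn2 PiE_iff ball2 box2_def, blast)

lemma rect_emeasure:
  assumes "a \<ge> 0"
  shows "emeasure (Rn_measure 2) (PiE {..<2} (box2 a)) = ennreal a"
proof -
  interpret finite_product_sigma_finite "\<lambda>_. lborel" "{..<2::nat}"
    by standard simp
  have "emeasure (Rn_measure 2) (PiE {..<2} (box2 a)) = (\<Prod>i\<in>{..<2::nat}. emeasure lborel (box2 a i))"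
    unfolding Rn_measure_def by (rule measure_times) (simp add: box2_def)
  also have "\<dots> = ennreal a" using assms by (simp add: box2_def numeral_2_eq_2)
  finally show ?thesis .
qed

lemma rect_sets: "PiE {..<2} (box2 a) \<in> sets (Rn_measure 2)"
  unfolding Rn_measure_def by (rule sets_PiM_I_finite) (auto simp: box2_def)


lemma adm_single:
  assumes "\<forall>(P, _) \<in> set L. alg_poly_fun n P" "basic_set n L \<in> sets (Rn_measure n)"
    "emeasure (Rn_measure n) (basic_set n L) < \<infinity>"
  shows "admissible_domain n (basic_set n L)"
  unfolding admissible_domain_def
  using assms by (intro conjI exI[of _ "{L}"]) auto

theorem corollary5p4:
  assumes "period_degree (exp 1) \<ge> 3"
  shows "\<not> algebraic (exp 1 + pi)"
proof
  assume alg: "algebraic (exp 1 + pi)"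
  define a where "a = exp 1 + pi"
  have a0: "a \<ge> 0" unfolding a_def using pi_gt_zero exp_gt_zero[of 1] by linarith
  define L1 where "L1 = [(\<lambda>x::nat\<Rightarrow>real. x 0, False), (\<lambda>x. a - x 0, False), (\<lambda>x. x 1, False), (\<lambda>x. 1 - x 1, False)]"
  define L2 where "L2 = [(\<lambda>x::nat\<Rightarrow>real. 1 - x 0 ^ 2 - x 1 ^ 2, False)]"
  have e1: "basic_set 2 L1 = PiE {..<2} (box2 a)" unfolding L1_def by (rule rect_eq)
  have m1: "emeasure (Rn_measure 2) (basic_set 2 L1) = ennreal a"
    using e1 rect_emeasure[OF a0] by simp
  have m2: "emeasure (Rn_measure 2) (basic_set 2 L2) = ennreal pi"
    unfolding L2_def by (rule disk_emeasure)
  have ad1: "admissible_domain 2 (basic_set 2 L1)"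
  proof (rule adm_single)
    show "\<forall>(P, _) \<in> set L1. alg_poly_fun 2 P"
      using alg poly_x1 poly_1_x1 unfolding L1_def a_def by (simp add: poly_x0 poly_a_x0)
    show "basic_set 2 L1 \<in> sets (Rn_measure 2)" using e1 rect_sets by simp
    show "emeasure (Rn_measure 2) (basic_set 2 L1) < \<infinity>" using m1 by simp
  qed
  have ad2: "admissible_domain 2 (basic_set 2 L2)"
  proof (rule adm_single)
    show "\<forall>(P, _) \<in> set L2. alg_poly_fun 2 P"
      using poly_disk unfolding L2_def by simp
    show "basic_set 2 L2 \<in> sets (Rn_measure 2)" unfolding L2_def by (rule disk_sets)
    show "emeasure (Rn_measure 2) (basic_set 2 L2) < \<infinity>" using m2 by simp
  qed
  have "measure (Rn_measure 2) (basic_set 2 L1) = a" using m1 a0 by (simp add: measure_def)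
  moreover have "measure (Rn_measure 2) (basic_set 2 L2) = pi" using m2 by (simp add: measure_def)
  ultimately have "exp 1 = measure (Rn_measure 2) (basic_set 2 L1) - measure (Rn_measure 2) (basic_set 2 L2)"
    unfolding a_def by simp
  hence pd: "period_in_dim 2 (exp 1)" unfolding period_in_dim_def using ad1 ad2 by blast
  hence rp: "real_period (exp 1)" unfolding real_period_def by (intro exI[of _ 2]) simp
  have le: "(LEAST n. n \<ge> 1 \<and> period_in_dim n (exp 1)) \<le> 2"
    by (rule Least_le) (simp add: pd)
  have "period_degree (exp 1) = enat (LEAST n. n \<ge> 1 \<and> period_in_dim n (exp 1))"
    unfolding period_degree_def using rp by simp
  hence h2: "period_degree (exp 1) \<le> enat 2" using le by simp
  have h3: "enat 3 \<le> period_degree (exp 1)" using assms by (simp add: numeral_eq_enat)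
  from order_trans[OF h3 h2] show False by simp
qed

end
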